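(* Let $\mathrm{E}$ be a law of the form $\mathrm{x}\simeq\mathrm{x}\diamond f(\mathrm{x},\mathrm{y},\mathrm{z})$, for some word $f$ in the variables $\mathrm{x},\mathrm{y},\mathrm{z}$, which implies the law $\mathrm{x}\diamond\mathrm{y}\simeq(\mathrm{x}\diamond\mathrm{y})\diamond\mathrm{y}$. Let $w\in M_X$ be irreducible and $w'\in M_X$ with $w\sim_{\mathrm{E}}w'$. (i) If $w=w_1\diamond w_2$, then $w'=(\cdots((w_1'\diamond w_2')\diamond v_1)\diamond\cdots)\diamond v_n$ for some $n\ge0$, words $w_1'\sim_{\mathrm{E}}w_1$, $w_2'\sim_{\mathrm{E}}w_2$, and words $v_1,\dots,v_n$ such that for each $0\le i<n$ there are words $x_i,y_i,z_i$ with $v_{i+1}\sim_{\mathrm{E}}f(x_i,y_i,z_i)$ and $x_i\sim_{\mathrm{E}}(\cdots((w_1'\diamond w_2')\diamond v_1)\diamond\cdots)\diamond v_i$ (in particular $v_{i+1}\to_{\mathrm{E}}x_i$). (ii) If $w\in X$ is a letter, then $w'=(\cdots(w\diamond v_1)\diamond\cdots)\diamond v_n$ for some $n\ge0$ and words $v_1,\dots,v_n$ such that for each $0\le i<n$ there are words $x_i,y_i,z_i$ with $v_{i+1}\sim_{\mathrm{E}}f(x_i,y_i,z_i)$ and $x_i\sim_{\mathrm{E}}(\cdots(w\diamond v_1)\diamond\cdots)\diamond v_i$. Conversely, every word of the form described in (i) (respectively (ii)) is $\sim_{\mathrm{E}}$-equivalent to $w$.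
   Context: $M_X$ is the set of words of the free magma on an alphabet $X$. For words $u,u'$, $u\sim_{\mathrm{E}}u'$ means the law $u\simeq u'$ is a consequence of $\mathrm{E}$ (holds in every magma satisfying $\mathrm{E}$). $f(x,y,z)$ denotes the word obtained from $f$ by substituting words $x,y,z$ for $\mathrm{x},\mathrm{y},\mathrm{z}$. Define the relation $u'\to_{\mathrm{E}}u$ (on words) to mean $u\sim_{\mathrm{E}}u''\diamond u'$ for some word $u''$; given that $\mathrm{E}$ implies $\mathrm{x}\diamond\mathrm{y}\simeq(\mathrm{x}\diamond\mathrm{y})\diamond\mathrm{y}$, this is equivalent to $u\sim_{\mathrm{E}}u\diamond u'$. A word $w$ is irreducible if it is not of the form $w_1\diamond w_2$ with $w_2\to_{\mathrm{E}}w_1$. *)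

theory Defs
  imports Main
begin

datatype 'v word = Var 'v | Op "'v word" "'v word"

datatype var3 = Vx | Vy | Vz

fun subst3 :: "var3 word \<Rightarrow> 'v word \<Rightarrow> 'v word \<Rightarrow> 'v word \<Rightarrow> 'v word" where
  "subst3 (Var Vx) x y z = x"
| "subst3 (Var Vy) x y z = y"
| "subst3 (Var Vz) x y z = z"
| "subst3 (Op a b) x y z = Op (subst3 a x y z) (subst3 b x y z)"

fun eval :: "('c \<Rightarrow> 'c \<Rightarrow> 'c) \<Rightarrow> ('v \<Rightarrow> 'c) \<Rightarrow> 'v word \<Rightarrow> 'c" where
  "eval op env (Var a) = env a"
| "eval op env (Op u v) = op (eval op env u) (eval op env v)"

definition satisfiesE :: "'c set \<Rightarrow> ('c \<Rightarrow> 'c \<Rightarrow> 'c) \<Rightarrow> var3 word \<Rightarrow> bool" where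
  "satisfiesE C op f \<longleftrightarrow> (\<forall>a\<in>C. \<forall>b\<in>C. op a b \<in> C) \<and>
     (\<forall>env. range env \<subseteq> C \<longrightarrow> env Vx = op (env Vx) (eval op env f))"

text \<open>Magmas are taken with carriers inside the type ('v word set), which is
  large enough to contain a copy of the relatively free magma on 'v, so
  this coincides with holding in all magmas satisfying E.\<close>
definition equivE :: "var3 word \<Rightarrow> 'v word \<Rightarrow> 'v word \<Rightarrow> bool" where
  "equivE f u u' \<longleftrightarrow>
     (\<forall>(C :: 'v word set set) op. satisfiesE C op f \<longrightarrow>
        (\<forall>env. range env \<subseteq> C \<longrightarrow> eval op env u = eval op env u'))"

definition arrowE :: "var3 word \<Rightarrow> 'v word \<Rightarrow> 'v word \<Rightarrow> bool" where
  "arrowE f u' u \<longleftrightarrow> (\<exists>u''. equivE f u (Op u'' u'))"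

definition irreducibleE :: "var3 word \<Rightarrow> 'v word \<Rightarrow> bool" where
  "irreducibleE f w \<longleftrightarrow> \<not> (\<exists>w1 w2. w = Op w1 w2 \<and> arrowE f w2 w1)"

definition iter_prod :: "'v word \<Rightarrow> 'v word list \<Rightarrow> 'v word" where
  "iter_prod w0 vs = foldl Op w0 vs"

definition admissible :: "var3 word \<Rightarrow> 'v word \<Rightarrow> 'v word list \<Rightarrow> bool" where
  "admissible f w0 vs \<longleftrightarrow>
     (\<forall>i < length vs. \<exists>x y z. equivE f (vs ! i) (subst3 f x y z) \<and>
                               equivE f x (iter_prod w0 (take i vs)))"

end

theory Submission
  imports Defs
begin

inductive rstep :: "var3 word \<Rightarrow> 'v word \<Rightarrow> 'v word \<Rightarrow> bool" for f where
  rroot: "rstep f s (Op s (subst3 f s y z))"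
| rleft: "rstep f a a' \<Longrightarrow> rstep f (Op a b) (Op a' b)"
| rright: "rstep f b b' \<Longrightarrow> rstep f (Op a b) (Op a b')"

definition rrel :: "var3 word \<Rightarrow> 'v word \<Rightarrow> 'v word \<Rightarrow> bool" where
  "rrel f u v \<longleftrightarrow> rstep f u v \<or> rstep f v u"

inductive Hs :: "var3 word \<Rightarrow> ('v word \<Rightarrow> bool) \<Rightarrow> 'v word \<Rightarrow> bool" for f Base where
  hbase: "Base u \<Longrightarrow> Hs f Base u"
| hsnoc: "Hs f Base u \<Longrightarrow> equivE f v (subst3 f x y z) \<Longrightarrow> equivE f x u \<Longrightarrow> Hs f Base (Op u v)"

lemma eq_refl: "equivE f u u"
  unfolding equivE_def by auto

lemma eq_sym: "equivE f u v \<Longrightarrow> equivE f v u"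
  unfolding equivE_def by metis

lemma eq_trans: "equivE f u v \<Longrightarrow> equivE f v t \<Longrightarrow> equivE f u t"
  unfolding equivE_def by metis

lemmas [trans] = eq_trans

lemma eq_cong: "equivE f a a' \<Longrightarrow> equivE f b b' \<Longrightarrow> equivE f (Op a b) (Op a' b')"
  unfolding equivE_def by simp

lemma eval_in: "(\<forall>a\<in>C. \<forall>b\<in>C. op a b \<in> C) \<Longrightarrow> range env \<subseteq> C \<Longrightarrow> eval op env u \<in> C"
  by (induction u) auto

lemma eval_subst3: "eval op env (subst3 t x y z) =
   eval op (\<lambda>v. case v of Vx \<Rightarrow> eval op env x | Vy \<Rightarrow> eval op env y | Vz \<Rightarrow> eval op env z) t"
proof (induction t)
  case (Var v) then show ?case by (cases v) auto
qed auto

lemma eq_law: fixes x y z :: "'v word" shows "equivE f x (Op x (subst3 f x y z))"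
  unfolding equivE_def
proof (intro allI impI)
  fix C :: "'v word set set" and op and env :: "'v \<Rightarrow> 'v word set"
  assume s: "satisfiesE C op f" and r: "range env \<subseteq> C"
  define env' where "env' = (\<lambda>v. case v of Vx \<Rightarrow> eval op env x | Vy \<Rightarrow> eval op env y | Vz \<Rightarrow> eval op env z)"
  have cl: "\<forall>a\<in>C. \<forall>b\<in>C. op a b \<in> C" using s unfolding satisfiesE_def by blast
  have "range env' \<subseteq> C" unfolding env'_def using eval_in[OF cl r]
    by (auto split: var3.splits)
  then have "env' Vx = op (env' Vx) (eval op env' f)" using s unfolding satisfiesE_def by blast
  then show "eval op env x = eval op env (Op x (subst3 f x y z))"
    by (simp add: eval_subst3 env'_def)
qed

lemma rstep_sound: "rstep f u v \<Longrightarrow> equivE f u v"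
  by (induction rule: rstep.induct) (auto intro: eq_law eq_cong eq_refl)

lemma rrel_sound: "rrel f u v \<Longrightarrow> equivE f u v"
  unfolding rrel_def using rstep_sound eq_sym by blast

lemma R_congL: "(rrel f)\<^sup>*\<^sup>* a a' \<Longrightarrow> (rrel f)\<^sup>*\<^sup>* (Op a b) (Op a' b)"
proof (induction rule: rtranclp_induct)
  case (step y z)
  then have "rrel f (Op y b) (Op z b)" unfolding rrel_def by (auto intro: rstep.intros)
  then show ?case using step by (meson rtranclp.rtrancl_into_rtrancl)
qed auto

lemma R_congR: "(rrel f)\<^sup>*\<^sup>* b b' \<Longrightarrow> (rrel f)\<^sup>*\<^sup>* (Op a b) (Op a b')"
proof (induction rule: rtranclp_induct)
  case (step y z)
  then have "rrel f (Op a y) (Op a z)" unfolding rrel_def by (auto intro: rstep.intros)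
  then show ?case using step by (meson rtranclp.rtrancl_into_rtrancl)
qed auto

lemma R_sym: "(rrel f)\<^sup>*\<^sup>* a b \<Longrightarrow> (rrel f)\<^sup>*\<^sup>* b a"
proof (induction rule: rtranclp_induct)
  case (step y z)
  then have "rrel f z y" unfolding rrel_def by auto
  then show ?case using step by (meson converse_rtranclp_into_rtranclp)
qed auto

lemma R_cong: "(rrel f)\<^sup>*\<^sup>* a a' \<Longrightarrow> (rrel f)\<^sup>*\<^sup>* b b' \<Longrightarrow> (rrel f)\<^sup>*\<^sup>* (Op a b) (Op a' b')"
  by (meson R_congL R_congR rtranclp_trans)

lemma completeness:
  fixes u v :: "'v word"
  assumes e: "equivE f u v"
  shows "(rrel f)\<^sup>*\<^sup>* u v"
proof -
  let ?R = "(rrel f)\<^sup>*\<^sup>* :: 'v word \<Rightarrow> 'v word \<Rightarrow> bool"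
  define cls where "cls = (\<lambda>t. {s. ?R t s})"
  define op where "op = (\<lambda>A B. cls (Op (SOME a. a \<in> A) (SOME b. b \<in> B)))"
  have cls_eq: "cls a = cls b \<longleftrightarrow> ?R a b" for a b
  proof
    assume "cls a = cls b"
    then have "b \<in> cls a" unfolding cls_def by auto
    then show "?R a b" unfolding cls_def by auto
  next
    assume h: "?R a b"
    show "cls a = cls b" unfolding cls_def using h R_sym
      by (auto intro: rtranclp_trans)
  qed
  have opc: "op (cls a) (cls b) = cls (Op a b)" for a b
  proof -
    have "(SOME a'. a' \<in> cls a) \<in> cls a" by (rule someI[of _ a]) (simp add: cls_def)
    moreover have "(SOME b'. b' \<in> cls b) \<in> cls b" by (rule someI[of _ b]) (simp add: cls_def)
    ultimately show ?thesis unfolding op_def cls_eq using R_cong R_sym cls_def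
      by (metis mem_Collect_eq)
  qed
  have evs: "eval op (\<lambda>v. cls (g v)) t = cls (subst3 t (g Vx) (g Vy) (g Vz))" for g and t :: "var3 word"
  proof (induction t)
    case (Var x) then show ?case by (cases x) auto
  qed (simp add: opc)
  have ev: "eval op (\<lambda>v. cls (Var v)) t = cls t" for t
    by (induction t) (auto simp: opc)
  have sat: "satisfiesE (range cls) op f"
    unfolding satisfiesE_def
  proof (intro conjI allI impI ballI)
    fix a b assume "a \<in> range cls" "b \<in> range cls"
    then show "op a b \<in> range cls" using opc by auto
  next
    fix env :: "var3 \<Rightarrow> 'v word set" assume "range env \<subseteq> range cls"
    then have "\<forall>v. \<exists>t. env v = cls t" by auto
    then obtain g where g: "\<And>v. env v = cls (g v)" by metis
    have envg: "env = (\<lambda>v. cls (g v))" using g by auto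
    have "?R (g Vx) (Op (g Vx) (subst3 f (g Vx) (g Vy) (g Vz)))"
      unfolding rrel_def by (auto intro: rstep.intros)
    then show "env Vx = op (env Vx) (eval op env f)"
      unfolding envg evs opc cls_eq .
  qed
  have "range (\<lambda>v. cls (Var v)) \<subseteq> range cls" by auto
  then have "eval op (\<lambda>v. cls (Var v)) u = eval op (\<lambda>v. cls (Var v)) v"
    using e sat unfolding equivE_def by blast
  then show ?thesis unfolding ev cls_eq .
qed

lemma Hs_rel:
  assumes hB: "\<And>u u'. Base u \<Longrightarrow> rrel f u u' \<Longrightarrow> Hs f Base u'"
  shows "Hs f Base u \<Longrightarrow> rrel f u u' \<Longrightarrow> Hs f Base u'"
proof (induction u arbitrary: u' rule: Hs.induct)
  case (hbase u)
  then show ?case using hB by blast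
next
  case (hsnoc u v x y z)
  have H: "Hs f Base (Op u v)" using hsnoc.hyps by (blast intro: Hs.intros)
  from hsnoc.prems consider "rstep f (Op u v) u'" | "rstep f u' (Op u v)" unfolding rrel_def by blast
  then show ?case
  proof cases
    case 1
    then show ?thesis
    proof cases
      case (rroot y z)
      then show ?thesis using H by (auto intro!: Hs.hsnoc eq_refl)
    next
      case (rleft a')
      then have "Hs f Base a'" using hsnoc.IH unfolding rrel_def by blast
      moreover have "equivE f x a'" using hsnoc.hyps rleft rstep_sound eq_trans by blast
      ultimately show ?thesis using rleft hsnoc.hyps by (auto intro: Hs.hsnoc)
    next
      case (rright b')
      have "equivE f b' (subst3 f x y z)" using hsnoc.hyps rright rstep_sound eq_trans eq_sym by blast
      then show ?thesis using rright hsnoc.hyps by (auto intro: Hs.hsnoc)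
    qed
  next
    case 2
    then show ?thesis
    proof cases
      case (rroot y z)
      then show ?thesis using hsnoc.hyps by auto
    next
      case (rleft a')
      then have "Hs f Base a'" using hsnoc.IH unfolding rrel_def by blast
      moreover have "equivE f x a'" using hsnoc.hyps rleft rstep_sound eq_trans eq_sym by blast
      ultimately show ?thesis using rleft hsnoc.hyps by (auto intro: Hs.hsnoc)
    next
      case (rright b')
      have "equivE f b' (subst3 f x y z)" using hsnoc.hyps rright rstep_sound eq_trans by blast
      then show ?thesis using rright hsnoc.hyps by (auto intro: Hs.hsnoc)
    qed
  qed
qed

lemma Hs_R:
  assumes hB: "\<And>u u'. Base u \<Longrightarrow> rrel f u u' \<Longrightarrow> Hs f Base u'"
  shows "(rrel f)\<^sup>*\<^sup>* w w' \<Longrightarrow> Hs f Base w \<Longrightarrow> Hs f Base w'"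
proof (induction rule: rtranclp_induct)
  case (step y z)
  then show ?case using Hs_rel[of Base f y z] hB by blast
qed

lemma Hs_sound:
  assumes "\<And>u. Base u \<Longrightarrow> equivE f u w"
  shows "Hs f Base u \<Longrightarrow> equivE f u w"
proof (induction rule: Hs.induct)
  case (hbase u) then show ?case using assms by blast
next
  case (hsnoc u v x y z)
  have "equivE f (Op u v) (Op x (subst3 f x y z))"
    using hsnoc eq_cong eq_sym by blast
  also have "equivE f (Op x (subst3 f x y z)) x" using eq_law eq_sym by blast
  finally show ?case using hsnoc eq_trans by blast
qed

lemma adm_snoc: "admissible f B (vs @ [v]) \<longleftrightarrow> admissible f B vs \<and>
   (\<exists>x y z. equivE f v (subst3 f x y z) \<and> equivE f x (iter_prod B vs))"
  unfolding admissible_def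
  by (auto simp: nth_append less_Suc_eq)

lemma Hs_form: "Hs f Base u \<Longrightarrow> \<exists>B vs. Base B \<and> u = iter_prod B vs \<and> admissible f B vs"
proof (induction rule: Hs.induct)
  case (hbase u)
  then show ?case by (rule_tac x=u in exI, rule_tac x="[]" in exI) (auto simp: iter_prod_def admissible_def)
next
  case (hsnoc u v x y z)
  then obtain B vs where "Base B" "u = iter_prod B vs" "admissible f B vs" by blast
  then show ?case using hsnoc
    by (rule_tac x=B in exI, rule_tac x="vs @ [v]" in exI) (auto simp: adm_snoc iter_prod_def)
qed

lemma form_Hs: "Base B \<Longrightarrow> admissible f B vs \<Longrightarrow> Hs f Base (iter_prod B vs)"
proof (induction vs rule: rev_induct)
  case Nil then show ?case by (auto simp: iter_prod_def intro: Hs.hbase)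
next
  case (snoc v vs)
  then show ?case by (auto simp: adm_snoc iter_prod_def intro: Hs.hsnoc)
qed

theorem mainTheorem11:
  fixes f :: "var3 word" and w w' :: "'v word"
  assumes hE: "equivE f (Op (Var Vx) (Var Vy)) (Op (Op (Var Vx) (Var Vy)) (Var Vy))"
    and hw: "irreducibleE f w"
  shows "(\<forall>w1 w2. w = Op w1 w2 \<longrightarrow>
            (equivE f w w' \<longleftrightarrow>
              (\<exists>w1' w2' vs. w' = iter_prod (Op w1' w2') vs \<and>
                 equivE f w1' w1 \<and> equivE f w2' w2 \<and> admissible f (Op w1' w2') vs)))
       \<and> (\<forall>a. w = Var a \<longrightarrow>
            (equivE f w w' \<longleftrightarrow>
              (\<exists>vs. w' = iter_prod w vs \<and> admissible f w vs)))"
proof (intro conjI allI impI)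
  fix w1 w2 assume ww: "w = Op w1 w2"
  define Base where "Base = (\<lambda>u. \<exists>u1 u2. u = Op u1 u2 \<and> equivE f u1 w1 \<and> equivE f u2 w2)"
  have hB: "Hs f Base u'" if "Base u" "rrel f u u'" for u u'
  proof -
    from that(1) obtain u1 u2 where u: "u = Op u1 u2" "equivE f u1 w1" "equivE f u2 w2"
      unfolding Base_def by blast
    from that(2) consider "rstep f u u'" | "rstep f u' u" unfolding rrel_def by blast
    then show ?thesis
    proof cases
      case 1
      then show ?thesis
      proof cases
        case (rroot y z)
        then show ?thesis using Hs.hsnoc[where f=f, OF Hs.hbase[where f=f and Base=Base, OF that(1)] _ eq_refl] eq_refl[of f] by auto
      next
        case (rleft a a' b)
        then show ?thesis using u unfolding Base_def
          by (auto intro!: Hs.hbase dest!: rstep_sound) (meson eq_sym eq_trans)+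
      next
        case (rright b b' a)
        then show ?thesis using u unfolding Base_def
          by (auto intro!: Hs.hbase dest!: rstep_sound) (meson eq_sym eq_trans)+
      qed
    next
      case 2
      then show ?thesis
      proof cases
        case (rroot y z)
        have "equivE f w1 (Op w1 w2)"
        proof -
          have "equivE f w1 u'" using u rroot eq_sym by auto
          also have "equivE f u' u" using rroot eq_law by auto
          also have "equivE f u (Op w1 w2)" using u eq_cong by auto
          finally show ?thesis using eq_trans by blast
        qed
        then have False using hw ww unfolding irreducibleE_def arrowE_def by blast
        then show ?thesis ..
      next
        case (rleft a a' b)
        then show ?thesis using u unfolding Base_def
          by (auto intro!: Hs.hbase dest!: rstep_sound) (meson eq_sym eq_trans)+
      next
        case (rright b b' a)
        then show ?thesis using u unfolding Base_def
          by (auto intro!: Hs.hbase dest!: rstep_sound) (meson eq_sym eq_trans)+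
      qed
    qed
  qed
  show "equivE f w w' \<longleftrightarrow>
              (\<exists>w1' w2' vs. w' = iter_prod (Op w1' w2') vs \<and>
                 equivE f w1' w1 \<and> equivE f w2' w2 \<and> admissible f (Op w1' w2') vs)"
  proof
    assume "equivE f w w'"
    then have R: "(rrel f)\<^sup>*\<^sup>* w w'" by (rule completeness)
    have H: "Hs f Base w" unfolding ww Base_def by (auto intro!: Hs.hbase eq_refl)
    have "Hs f Base w'" by (rule Hs_R[where Base=Base and f=f, OF _ R H]) (rule hB)
    then show "\<exists>w1' w2' vs. w' = iter_prod (Op w1' w2') vs \<and>
                 equivE f w1' w1 \<and> equivE f w2' w2 \<and> admissible f (Op w1' w2') vs"
      using Hs_form unfolding Base_def by blast
  next
    assume "\<exists>w1' w2' vs. w' = iter_prod (Op w1' w2') vs \<and>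
                 equivE f w1' w1 \<and> equivE f w2' w2 \<and> admissible f (Op w1' w2') vs"
    then obtain w1' w2' vs where h: "w' = iter_prod (Op w1' w2') vs" "equivE f w1' w1"
      "equivE f w2' w2" "admissible f (Op w1' w2') vs" by blast
    then have "Hs f Base w'" using form_Hs[of Base] unfolding Base_def by blast
    moreover have "equivE f u w" if "Base u" for u
      using that unfolding Base_def ww by (auto intro: eq_cong)
    ultimately have "equivE f w' w" using Hs_sound by blast
    then show "equivE f w w'" by (rule eq_sym)
  qed
next
  fix a assume ww: "w = Var a"
  define Base where "Base = (\<lambda>u. u = (Var a :: 'v word))"
  have hB: "Hs f Base u'" if "Base u" "rrel f u u'" for u u'
  proof -
    from that have u: "u = Var a" unfolding Base_def by simp
    from that(2) consider "rstep f u u'" | "rstep f u' u" unfolding rrel_def by blast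
    then show ?thesis
    proof cases
      case 1
      then show ?thesis
      proof cases
        case (rroot y z)
        then show ?thesis using Hs.hsnoc[where f=f, OF Hs.hbase[where f=f and Base=Base, OF that(1)] _ eq_refl] eq_refl[of f] by auto
      qed (use u in auto)
    next
      case 2
      then show ?thesis by cases (use u in auto)
    qed
  qed
  show "equivE f w w' \<longleftrightarrow> (\<exists>vs. w' = iter_prod w vs \<and> admissible f w vs)"
  proof
    assume "equivE f w w'"
    then have R: "(rrel f)\<^sup>*\<^sup>* w w'" by (rule completeness)
    have H: "Hs f Base w" unfolding ww Base_def by (auto intro!: Hs.hbase)
    have "Hs f Base w'" by (rule Hs_R[where Base=Base and f=f, OF _ R H]) (rule hB)
    then show "\<exists>vs. w' = iter_prod w vs \<and> admissible f w vs"
      using Hs_form unfolding Base_def ww by blast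
  next
    assume "\<exists>vs. w' = iter_prod w vs \<and> admissible f w vs"
    then obtain vs where h: "w' = iter_prod w vs" "admissible f w vs" by blast
    then have "Hs f Base w'" using form_Hs[of Base] unfolding Base_def ww by blast
    moreover have "equivE f u w" if "Base u" for u
      using that unfolding Base_def ww by (auto intro: eq_refl)
    ultimately have "equivE f w' w" using Hs_sound by blast
    then show "equivE f w w'" by (rule eq_sym)
  qed
qed

end
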